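(* Let $\mathcal{H}$ be a Hilbert space, $\mathbb{S}_{1/2}=\{z\in\mathbb{C}: 0<\mathrm{Im}\,z<1/2\}$, and let $A:\overline{\mathbb{S}_{1/2}}\to B(\mathcal{H})$ be a norm-bounded map that is continuous in the strong operator topology and analytic on $\mathbb{S}_{1/2}$. Let $A_0\in B(\mathcal{H})$ be such that $\lim_{t\to-\infty}A(t)=\lim_{t\to-\infty}A(t+\tfrac{i}{2})=A_0$ in the strong operator topology. Then for every $\psi\in\mathcal{H}$, $\lim_{t\to-\infty}\|A(t+iy)\psi-A_0\psi\|=0$ uniformly in $y\in[0,\tfrac12]$.
   Context: Analyticity of an operator-valued function may be taken in the norm, strong or weak operator topology (these are equivalent). *)

theory Defs
  imports "HOL-Analysis.Analysis"
begin

text \<open>The distribution only has real inner product spaces,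
so we add a complex scalar multiplication compatible with the real one and with the
norm. A complex normed space whose norm comes from a (real) inner product is exactly
a complex inner product space (polarization), so together with completeness this
class is the class of complex Hilbert spaces.\<close>

class complex_inner_space = real_inner +
  fixes scaleC :: "complex \<Rightarrow> 'a \<Rightarrow> 'a" (infixr \<open>*\<^sub>C\<close> 75)
  assumes scaleC_add_right: "a *\<^sub>C (x + y) = a *\<^sub>C x + a *\<^sub>C y"
    and scaleC_add_left: "(a + b) *\<^sub>C x = a *\<^sub>C x + b *\<^sub>C x"
    and scaleC_scaleC: "a *\<^sub>C (b *\<^sub>C x) = (a * b) *\<^sub>C x"
    and scaleC_one: "1 *\<^sub>C x = x"
    and scaleC_of_real: "complex_of_real r *\<^sub>C x = r *\<^sub>R x"
    and norm_scaleC: "norm (a *\<^sub>C x) = cmod a * norm x"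

class complex_hilbert_space = complex_inner_space + complete_space

definition bounded_clinear :: "('a::complex_inner_space \<Rightarrow> 'b::complex_inner_space) \<Rightarrow> bool" where
  "bounded_clinear f \<longleftrightarrow>
     (\<forall>x y. f (x + y) = f x + f y) \<and> (\<forall>c x. f (c *\<^sub>C x) = c *\<^sub>C f x) \<and>
     (\<exists>K. \<forall>x. norm (f x) \<le> norm x * K)"

definition vec_holomorphic_on :: "(complex \<Rightarrow> 'a::complex_inner_space) \<Rightarrow> complex set \<Rightarrow> bool" where
  "vec_holomorphic_on f S \<longleftrightarrow>
     (\<forall>z\<in>S. \<exists>v. (f has_derivative (\<lambda>h. h *\<^sub>C v)) (at z within S))"

definition strip_half :: "complex set" where
  "strip_half = {z. 0 < Im z \<and> Im z < 1/2}"

end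

theory Submission
  imports Defs "HOL-Complex_Analysis.Complex_Analysis"
begin

lemma J_scaleR: "\<i> *\<^sub>C (r *\<^sub>R (x::'a::complex_inner_space)) = r *\<^sub>R (\<i> *\<^sub>C x)"
proof -
  have "\<i> *\<^sub>C (r *\<^sub>R x) = \<i> *\<^sub>C (complex_of_real r *\<^sub>C x)" by (simp add: scaleC_of_real)
  also have "\<dots> = (complex_of_real r * \<i>) *\<^sub>C x" by (simp add: scaleC_scaleC mult.commute)
  also have "\<dots> = r *\<^sub>R (\<i> *\<^sub>C x)" by (simp add: scaleC_scaleC[symmetric] scaleC_of_real)
  finally show ?thesis .
qed

lemma J_add: "\<i> *\<^sub>C ((x::'a::complex_inner_space) + y) = \<i> *\<^sub>C x + \<i> *\<^sub>C y"
  by (rule scaleC_add_right)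

lemma J_diff: "\<i> *\<^sub>C ((x::'a::complex_inner_space) - y) = \<i> *\<^sub>C x - \<i> *\<^sub>C y"
proof -
  have "\<i> *\<^sub>C (x - y) = \<i> *\<^sub>C (x + (-1) *\<^sub>R y)" by simp
  also have "\<dots> = \<i> *\<^sub>C x - \<i> *\<^sub>C y" by (simp only: J_add J_scaleR) simp
  finally show ?thesis .
qed

lemma JJ: "\<i> *\<^sub>C \<i> *\<^sub>C (x::'a::complex_inner_space) = - x"
proof -
  have "\<i> *\<^sub>C \<i> *\<^sub>C x = (complex_of_real (-1)) *\<^sub>C x" by (simp add: scaleC_scaleC)
  also have "\<dots> = - x" using scaleC_of_real[of "-1" x] by simp
  finally show ?thesis .
qed

lemma norm_J: "norm (\<i> *\<^sub>C (x::'a::complex_inner_space)) = norm x"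
  by (simp add: norm_scaleC)

lemma inner_polar: "4 * inner (x::'a::real_inner) y = (norm (x+y))^2 - (norm (x-y))^2"
  by (simp add: power2_norm_eq_inner inner_add_left inner_add_right inner_diff_left inner_diff_right inner_commute)

lemma inner_JJ: "inner (\<i> *\<^sub>C (x::'a::complex_inner_space)) (\<i> *\<^sub>C y) = inner x y"
proof -
  have "4 * inner (\<i> *\<^sub>C x) (\<i> *\<^sub>C y) = 4 * inner x y"
    by (simp only: inner_polar J_add[symmetric] J_diff[symmetric] norm_J)
  then show ?thesis by simp
qed

lemma inner_J_left: "inner (\<i> *\<^sub>C (v::'a::complex_inner_space)) u = - inner v (\<i> *\<^sub>C u)"
proof -
  have "inner (\<i> *\<^sub>C v) u = inner (\<i> *\<^sub>C \<i> *\<^sub>C v) (\<i> *\<^sub>C u)" by (simp add: inner_JJ)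
  also have "\<dots> = - inner v (\<i> *\<^sub>C u)" by (simp add: JJ)
  finally show ?thesis .
qed

lemma inner_J_self: "inner (u::'a::complex_inner_space) (\<i> *\<^sub>C u) = 0"
  using inner_J_left[of u u] by (simp add: inner_commute)

definition lf :: "'a::complex_inner_space \<Rightarrow> 'a \<Rightarrow> complex" where
  "lf u v = Complex (inner v u) (inner v (\<i> *\<^sub>C u))"

lemma scaleC_decomp: "h *\<^sub>C (v::'a::complex_inner_space) = Re h *\<^sub>R v + Im h *\<^sub>R (\<i> *\<^sub>C v)"
proof -
  have "h = complex_of_real (Re h) + \<i> * complex_of_real (Im h)" by (simp add: complex_eq_iff)
  then have "h *\<^sub>C v = complex_of_real (Re h) *\<^sub>C v + (\<i> * complex_of_real (Im h)) *\<^sub>C v"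
    by (metis scaleC_add_left)
  also have "\<dots> = Re h *\<^sub>R v + Im h *\<^sub>R (\<i> *\<^sub>C v)"
    by (simp add: scaleC_of_real scaleC_scaleC[symmetric] J_scaleR)
  finally show ?thesis .
qed

lemma lf_scaleC: "lf u (h *\<^sub>C v) = h * lf u v"
  unfolding scaleC_decomp[of h v]
  by (simp add: lf_def inner_add_left inner_J_left inner_JJ JJ complex_eq_iff algebra_simps)

lemma Re_lf: "Re (lf u v) = inner v u"
  by (simp add: lf_def)

lemma lf_bound:
  assumes "norm u = 1"
  shows "cmod (lf u (v::'a::complex_inner_space)) \<le> norm v"
proof -
  define p where "p = inner v u"
  define q where "q = inner v (\<i> *\<^sub>C u)"
  define w where "w = v - p *\<^sub>R u - q *\<^sub>R (\<i> *\<^sub>C u)"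
  have uu: "inner u u = 1" using assms by (simp add: power2_norm_eq_inner[symmetric])
  have jj: "inner (\<i> *\<^sub>C u) (\<i> *\<^sub>C u) = 1" using uu inner_JJ by metis
  have uj: "inner u (\<i> *\<^sub>C u) = 0" "inner (\<i> *\<^sub>C u) u = 0"
    using inner_J_self inner_commute by metis+
  have "0 \<le> inner w w" by simp
  also have "inner w w = inner v v - p^2 - q^2"
    unfolding w_def
    by (simp add: inner_diff_left inner_diff_right uu jj uj p_def[symmetric] q_def[symmetric]
        inner_commute[of u v] inner_commute[of "\<i> *\<^sub>C u" v] power2_eq_square algebra_simps)
  finally have "p^2 + q^2 \<le> (norm v)^2" by (simp add: power2_norm_eq_inner)
  then have "sqrt (p^2 + q^2) \<le> norm v" by (simp add: real_le_lsqrt)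
  then show ?thesis by (simp add: lf_def cmod_def p_def q_def)
qed

lemma bl_lf: "bounded_linear (lf (u::'a::complex_inner_space))"
proof -
  have "lf u = (\<lambda>v. complex_of_real (inner v u) + \<i> * complex_of_real (inner v (\<i> *\<^sub>C u)))"
    by (auto simp: lf_def complex_eq_iff)
  moreover have "bounded_linear (\<lambda>v. complex_of_real (inner v u) + \<i> * complex_of_real (inner v (\<i> *\<^sub>C u)))"
  proof -
    have b1: "bounded_linear (\<lambda>v. complex_of_real (inner v u))"
      by (rule bounded_linear_compose[OF bounded_linear_of_real bounded_linear_inner_left])
    have b2: "bounded_linear (\<lambda>v. complex_of_real (inner v (\<i> *\<^sub>C u)))"
      by (rule bounded_linear_compose[OF bounded_linear_of_real bounded_linear_inner_left])
    have b3: "bounded_linear (\<lambda>v. \<i> * complex_of_real (inner v (\<i> *\<^sub>C u)))"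
      by (rule bounded_linear_compose[OF bounded_linear_mult_right b2])
    show ?thesis by (rule bounded_linear_add[OF b1 b3])
  qed
  ultimately show ?thesis by simp
qed



lemma closed_strip_sub: "{z. 0 \<le> Im z \<and> Im z \<le> 1/2} \<subseteq> closure strip_half"
proof
  fix z :: complex assume z: "z \<in> {z. 0 \<le> Im z \<and> Im z \<le> 1/2}"
  have z1: "0 \<le> Im z" "Im z \<le> 1/2" using z by auto
  show "z \<in> closure strip_half"
    unfolding closure_approachable
  proof (intro allI impI)
    fix e :: real assume e: "e > 0"
    define t where "t = min (1/2) e"
    have t: "0 < t" "t < 1" "t \<le> e" using e unfolding t_def by auto
    define y where "y = Complex (Re z) (Im z + t * (1/4 - Im z))"
    have imy: "Im y = (1 - t) * Im z + t / 4" unfolding y_def by (simp add: algebra_simps)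
    have a1: "0 \<le> (1 - t) * Im z" using z1 t by (intro mult_nonneg_nonneg) auto
    have a2: "(1 - t) * Im z \<le> (1 - t) * (1/2)" using z1 t by (intro mult_left_mono) auto
    have a3: "(1 - t) * (1/2) = 1/2 - t/2" by (simp add: field_simps)
    have "0 < Im y" "Im y < 1/2" using t a1 a2 a3 imy by linarith+
    then have ys: "y \<in> strip_half" unfolding strip_half_def by simp
    define r where "r = t * (1/4 - Im z)"
    have yz: "y - z = \<i> * complex_of_real r" by (simp add: y_def r_def complex_eq_iff)
    have "dist y z = cmod (\<i> * complex_of_real r)" using yz by (simp only: dist_norm)
    also have "\<dots> = \<bar>r\<bar>" by (simp only: norm_mult norm_ii norm_of_real mult_1)
    also have "\<dots> = t * \<bar>1/4 - Im z\<bar>" unfolding r_def abs_mult using t by simp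
    finally have d: "dist y z = t * \<bar>1/4 - Im z\<bar>" .
    have "\<bar>1/4 - Im z\<bar> \<le> 1/4" unfolding abs_le_iff using z1 by linarith
    then have "t * \<bar>1/4 - Im z\<bar> \<le> t * (1/4)" using t by (intro mult_left_mono) auto
    then have "dist y z < e" using t d by linarith
    then show "\<exists>y\<in>strip_half. dist y z < e" using ys by blast
  qed
qed

lemma open_strip: "open strip_half"
proof -
  have "strip_half = {z. 0 < Im z} \<inter> {z. Im z < 1/2}" by (auto simp: strip_half_def)
  moreover have "open {z. 0 < Im z}" by (rule open_halfspace_Im_gt)
  moreover have "open {z. Im z < 1/2}" by (rule open_halfspace_Im_lt)
  ultimately show ?thesis by (metis open_Int)
qed

lemma lf_holo:
  fixes f :: "complex \<Rightarrow> 'a::complex_inner_space"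
  assumes "vec_holomorphic_on f strip_half"
  shows "(\<lambda>z. lf u (f z - c)) holomorphic_on strip_half"
  unfolding holomorphic_on_def
proof
  fix z assume z: "z \<in> strip_half"
  obtain v where v: "(f has_derivative (\<lambda>h. h *\<^sub>C v)) (at z within strip_half)"
    using assms z unfolding vec_holomorphic_on_def by blast
  have "((\<lambda>z. f z - c) has_derivative (\<lambda>h. h *\<^sub>C v - 0)) (at z within strip_half)"
    by (intro has_derivative_diff v has_derivative_const)
  then have "((\<lambda>z. lf u (f z - c)) has_derivative (\<lambda>h. lf u (h *\<^sub>C v - 0))) (at z within strip_half)"
    by (rule bounded_linear.has_derivative[OF bl_lf])
  moreover have "(\<lambda>h. lf u (h *\<^sub>C v - 0)) = (*) (lf u v)"
    by (rule ext) (simp add: lf_scaleC mult.commute)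
  ultimately have "((\<lambda>z. lf u (f z - c)) has_field_derivative lf u v) (at z within strip_half)"
    by (simp add: has_field_derivative_def)
  then show "(\<lambda>z. lf u (f z - c)) field_differentiable at z within strip_half"
    unfolding field_differentiable_def by blast
qed



definition W :: "real \<Rightarrow> real \<Rightarrow> real \<Rightarrow> complex \<Rightarrow> complex" where
  "W \<epsilon> K T z = exp (complex_of_real \<epsilon> * (z - complex_of_real T)) *
      exp (- complex_of_real K * (1 - \<i>) * exp (complex_of_real pi * (z - complex_of_real T)))"

lemma normW: "cmod (W \<epsilon> K T z) = exp (\<epsilon>*(Re z - T)) * exp (-K * exp (pi*(Re z - T)) * (cos (pi*Im z) + sin (pi*Im z)))"
  by (simp add: W_def norm_mult Re_exp Im_exp algebra_simps)

lemma cs_bounds: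
  assumes "0 \<le> y" "y \<le> 1/2"
  shows "1 \<le> cos (pi*y) + sin (pi*y)" "cos (pi*y) + sin (pi*y) \<le> 2"
proof -
  have p1: "0 \<le> pi*y" using assms by simp
  have "pi*y \<le> pi*(1/2)" using assms by (intro mult_left_mono) auto
  then have p2: "pi*y \<le> pi/2" by simp
  have p3: "-(pi/2) \<le> pi*y" using p1 pi_gt_zero by linarith
  have p4: "pi*y \<le> pi" using p2 pi_gt_zero by linarith
  have c: "0 \<le> cos (pi*y)" using cos_ge_zero[OF p3 p2] .
  have s: "0 \<le> sin (pi*y)" using sin_ge_zero[OF p1 p4] .
  have "(cos (pi*y) + sin (pi*y))^2 = 1 + 2 * (cos (pi*y) * sin (pi*y))"
    using sin_cos_squared_add[of "pi*y"] by (simp add: power2_eq_square algebra_simps)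
  also have "\<dots> \<ge> 1^2" using c s by simp
  finally have "1^2 \<le> (cos (pi*y) + sin (pi*y))^2" .
  moreover have "0 \<le> cos (pi*y) + sin (pi*y)" using c s by linarith
  ultimately show "1 \<le> cos (pi*y) + sin (pi*y)" by (rule power2_le_imp_le)
  show "cos (pi*y) + sin (pi*y) \<le> 2" using cos_le_one[of "pi*y"] sin_le_one[of "pi*y"] by linarith
qed

lemma W_holo: "W \<epsilon> K T holomorphic_on S"
  unfolding W_def by (intro holomorphic_intros)

lemma W_cont: "continuous_on S (W \<epsilon> K T)"
  unfolding W_def by (intro continuous_intros)



lemma scalar_est:
  fixes F :: "complex \<Rightarrow> complex" and M \<delta> \<epsilon> T :: real
  assumes hol: "F holomorphic_on strip_half"
  and cont: "continuous_on {z. 0 \<le> Im z \<and> Im z \<le> 1/2} F"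
  and bnd: "\<And>z. 0 \<le> Im z \<Longrightarrow> Im z \<le> 1/2 \<Longrightarrow> cmod (F z) \<le> M"
  and bdry1: "\<And>t. t \<le> T \<Longrightarrow> cmod (F (complex_of_real t)) \<le> \<delta>"
  and bdry2: "\<And>t. t \<le> T \<Longrightarrow> cmod (F (complex_of_real t + \<i>/2)) \<le> \<delta>"
  and \<delta>: "\<delta> > 0" and \<epsilon>: "\<epsilon> > 0"
  and z0: "0 \<le> Im z0" "Im z0 \<le> 1/2" "Re z0 \<le> T"
  shows "cmod (F z0) * exp (\<epsilon>*(Re z0 - T)) * exp (-2*(M/\<delta>+1) * exp (pi*(Re z0 - T))) \<le> \<delta>"
proof -
  have M0: "0 \<le> M" using bnd[of 0] by (metis norm_ge_zero order.trans zero_complex.sel(2) order_refl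
      divide_nonneg_pos zero_le_one zero_less_numeral)
  define K where "K = M/\<delta> + 1"
  have K0: "K > 0" unfolding K_def using M0 \<delta> by (intro add_nonneg_pos divide_nonneg_pos) auto
  define S0 where "S0 = min (Re z0 - 1) (T - M/(\<delta>*\<epsilon>))"
  define g where "g z = W \<epsilon> K T z * F z" for z
  define a where "a = Complex S0 0"
  define b where "b = Complex T (1/2)"
  have strip_cl: "cbox a b \<subseteq> {z. 0 \<le> Im z \<and> Im z \<le> 1/2}"
    by (auto simp: in_cbox_complex_iff a_def b_def)
  have box_sub: "box a b \<subseteq> strip_half"
    by (auto simp: in_box_complex_iff a_def b_def strip_half_def)
  have Wb: "cmod (W \<epsilon> K T z) \<le> exp (\<epsilon>*(Re z - T)) * exp (-K * exp (pi*(Re z - T)))"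
    if "0 \<le> Im z" "Im z \<le> 1/2" for z
  proof -
    have "1 \<le> cos (pi*Im z) + sin (pi*Im z)" using cs_bounds that by auto
    then have "K * exp (pi*(Re z - T)) * 1 \<le> K * exp (pi*(Re z - T)) * (cos (pi*Im z) + sin (pi*Im z))"
      using K0 by (intro mult_left_mono) auto
    then show ?thesis unfolding normW by (intro mult_left_mono) auto
  qed
  have E1: "exp (\<epsilon>*(x - T)) \<le> 1" if "x \<le> T" for x
    using that \<epsilon> by (simp add: mult_nonneg_nonpos)
  have E2: "exp (-K * exp (pi*(x - T))) \<le> 1" for x
    using K0 by (simp add: mult_nonneg_nonneg)
  have Wle1: "cmod (W \<epsilon> K T z) \<le> 1" if "0 \<le> Im z" "Im z \<le> 1/2" "Re z \<le> T" for z
  proof -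
    have "exp (\<epsilon>*(Re z - T)) * exp (-K * exp (pi*(Re z - T))) \<le> 1 * 1"
      using E1[OF that(3)] E2[of "Re z"] by (intro mult_mono) auto
    then show ?thesis using Wb[OF that(1,2)] by simp
  qed
  have "cmod (g z0) \<le> \<delta>"
  proof (rule maximum_modulus_frontier[of g "cbox a b"])
    show "g holomorphic_on interior (cbox a b)"
      unfolding interior_cbox g_def
      by (intro holomorphic_on_mult W_holo holomorphic_on_subset[OF hol box_sub])
    show "continuous_on (closure (cbox a b)) g"
      unfolding closure_cbox g_def
      by (intro continuous_on_mult W_cont continuous_on_subset[OF cont strip_cl])
    show "bounded (cbox a b)" by (rule bounded_cbox)
    show "z0 \<in> cbox a b"
      using z0 by (auto simp: in_cbox_complex_iff a_def b_def S0_def)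
  next
    fix z assume "z \<in> frontier (cbox a b)"
    then have zc: "z \<in> cbox a b" and zb: "z \<notin> box a b" by (auto simp: frontier_cbox)
    from zc have r1: "S0 \<le> Re z" "Re z \<le> T" and i1: "0 \<le> Im z" "Im z \<le> 1/2"
      by (auto simp: in_cbox_complex_iff a_def b_def)
    from zb have cases: "Re z = S0 \<or> Re z = T \<or> Im z = 0 \<or> Im z = 1/2"
      using r1 i1 by (auto simp: in_box_complex_iff a_def b_def)
    have gn: "cmod (g z) = cmod (W \<epsilon> K T z) * cmod (F z)" by (simp add: g_def norm_mult)
    have Fn: "cmod (F z) \<le> M" using bnd i1 by auto
    consider "Im z = 0" | "Im z = 1/2" | "Re z = T" | "Re z = S0" using cases by blast
    then show "cmod (g z) \<le> \<delta>"
    proof cases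
      case 1
      then have "z = complex_of_real (Re z)" by (simp add: complex_eq_iff)
      then have "cmod (F z) \<le> \<delta>" using bdry1[OF r1(2)] by metis
      then show ?thesis unfolding gn using Wle1[OF i1 r1(2)]
        by (metis mult_left_le_one_le norm_ge_zero mult.commute mult_mono' order.trans mult_1)
    next
      case 2
      then have "z = complex_of_real (Re z) + \<i>/2" by (simp add: complex_eq_iff)
      then have "cmod (F z) \<le> \<delta>" using bdry2[OF r1(2)] by metis
      then show ?thesis unfolding gn using Wle1[OF i1 r1(2)]
        by (metis mult_left_le_one_le norm_ge_zero mult.commute mult_mono' order.trans mult_1)
    next
      case 3
      have "cmod (W \<epsilon> K T z) \<le> exp (-K)" using Wb[OF i1] 3 by simp
      moreover have "M * exp (-K) \<le> \<delta>"
      proof -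
        have "1 + K \<le> exp K" by (rule exp_ge_add_one_self)
        then have "M/\<delta> \<le> exp K" by (simp add: K_def)
        then have "M \<le> \<delta> * exp K" using \<delta> by (simp add: divide_le_eq mult.commute)
        then have "M / exp K \<le> \<delta>" by (simp add: pos_divide_le_eq mult.commute)
        then show ?thesis by (simp add: exp_minus divide_inverse)
      qed
      ultimately have "cmod (W \<epsilon> K T z) * cmod (F z) \<le> exp (-K) * M"
        using Fn by (intro mult_mono) auto
      then show ?thesis unfolding gn using \<open>M * exp (-K) \<le> \<delta>\<close> by (simp add: mult.commute)
    next
      case 4
      have "cmod (W \<epsilon> K T z) \<le> exp (\<epsilon>*(S0 - T))"
        using Wb[OF i1] 4 E2[of "Re z"] by (smt (verit) exp_gt_zero mult_left_le)
      moreover have "M * exp (\<epsilon>*(S0 - T)) \<le> \<delta>"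
      proof -
        have "1 + \<epsilon>*(T - S0) \<le> exp (\<epsilon>*(T - S0))" by (rule exp_ge_add_one_self)
        moreover have "M/\<delta> \<le> \<epsilon>*(T - S0)"
        proof -
          have "M/(\<delta>*\<epsilon>) \<le> T - S0" by (simp add: S0_def)
          then have "\<epsilon> * (M/(\<delta>*\<epsilon>)) \<le> \<epsilon>*(T - S0)" using \<epsilon> by (intro mult_left_mono) auto
          then show ?thesis using \<epsilon> by simp
        qed
        ultimately have "M/\<delta> \<le> exp (\<epsilon>*(T - S0))" by linarith
        then have "M \<le> \<delta> * exp (\<epsilon>*(T - S0))" using \<delta> by (simp add: divide_le_eq mult.commute)
        moreover have "exp (\<epsilon>*(S0 - T)) = inverse (exp (\<epsilon>*(T - S0)))"
          by (simp add: exp_minus[symmetric] algebra_simps)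
        ultimately show ?thesis
          by (metis divide_inverse exp_gt_zero mult.commute pos_divide_le_eq)
      qed
      ultimately have "cmod (W \<epsilon> K T z) * cmod (F z) \<le> exp (\<epsilon>*(S0 - T)) * M"
        using Fn by (intro mult_mono) auto
      then show ?thesis unfolding gn using \<open>M * exp (\<epsilon>*(S0 - T)) \<le> \<delta>\<close> by (simp add: mult.commute)
    qed
  qed
  moreover have "cmod (F z0) * exp (\<epsilon>*(Re z0 - T)) * exp (-2*K * exp (pi*(Re z0 - T))) \<le> cmod (g z0)"
  proof -
    have "cos (pi*Im z0) + sin (pi*Im z0) \<le> 2" using cs_bounds z0 by auto
    then have "K * exp (pi*(Re z0 - T)) * (cos (pi*Im z0) + sin (pi*Im z0)) \<le> K * exp (pi*(Re z0 - T)) * 2"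
      using K0 by (intro mult_left_mono) auto
    then have "exp (\<epsilon>*(Re z0 - T)) * exp (-2*K * exp (pi*(Re z0 - T))) \<le> cmod (W \<epsilon> K T z0)"
      unfolding normW by (intro mult_left_mono) (auto simp: algebra_simps)
    then have "(exp (\<epsilon>*(Re z0 - T)) * exp (-2*K * exp (pi*(Re z0 - T)))) * cmod (F z0) \<le> cmod (W \<epsilon> K T z0) * cmod (F z0)"
      by (rule mult_right_mono) simp
    then show ?thesis unfolding g_def norm_mult by (simp add: ac_simps)
  qed
  ultimately show ?thesis by (simp add: K_def)
qed



theorem mainTheorem4:
  fixes A :: "complex \<Rightarrow> 'h::complex_hilbert_space \<Rightarrow> 'h"
    and A0 :: "'h \<Rightarrow> 'h"
  assumes bounded_ops: "\<forall>z\<in>closure strip_half. bounded_clinear (A z)"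
    and norm_bounded: "\<exists>M. \<forall>z\<in>closure strip_half. \<forall>x. norm (A z x) \<le> M * norm x"
    and strongly_continuous: "\<forall>x. continuous_on (closure strip_half) (\<lambda>z. A z x)"
    and analytic: "\<forall>x. vec_holomorphic_on (\<lambda>z. A z x) strip_half"
    and A0_op: "bounded_clinear A0"
    and lim_bottom: "\<forall>x. ((\<lambda>t. A (complex_of_real t) x) \<longlongrightarrow> A0 x) at_bot"
    and lim_top: "\<forall>x. ((\<lambda>t. A (complex_of_real t + \<i> / 2) x) \<longlongrightarrow> A0 x) at_bot"
  shows "\<forall>\<psi>. uniform_limit {0..1/2} (\<lambda>t y. A (Complex t y) \<psi>) (\<lambda>y. A0 \<psi>) at_bot"
proof
  fix \<psi> :: 'h
  obtain M where M: "\<forall>z\<in>closure strip_half. \<forall>x. norm (A z x) \<le> M * norm x"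
    using norm_bounded by blast
  define f where "f z = A z \<psi> - A0 \<psi>" for z
  define M' where "M' = M * norm \<psi> + norm (A0 \<psi>)"
  have fb: "norm (f z) \<le> M'" if "0 \<le> Im z" "Im z \<le> 1/2" for z
  proof -
    have "z \<in> closure strip_half" using closed_strip_sub that by auto
    then have "norm (A z \<psi>) \<le> M * norm \<psi>" using M by blast
    moreover have "norm (f z) \<le> norm (A z \<psi>) + norm (A0 \<psi>)"
      unfolding f_def by (rule norm_triangle_ineq4)
    ultimately show ?thesis unfolding M'_def by linarith
  qed
  have M'0: "0 \<le> M'" using fb[of 0] norm_ge_zero[of "f 0"] by (simp del: norm_ge_zero)
  have contA: "continuous_on {z. 0 \<le> Im z \<and> Im z \<le> 1/2} f"
    unfolding f_def
    by (intro continuous_on_diff continuous_on_const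
        continuous_on_subset[OF spec[OF strongly_continuous] closed_strip_sub])
  show "uniform_limit {0..1/2} (\<lambda>t y. A (Complex t y) \<psi>) (\<lambda>y. A0 \<psi>) at_bot"
    unfolding uniform_limit_iff
  proof (intro allI impI)
    fix e :: real assume e: "e > 0"
    define \<delta> where "\<delta> = e/3"
    have \<delta>: "\<delta> > 0" using e by (simp add: \<delta>_def)
    have "\<forall>\<^sub>F t in at_bot. dist (A (complex_of_real t) \<psi>) (A0 \<psi>) < \<delta>"
      using spec[OF lim_bottom, of \<psi>] \<delta> by (simp add: tendsto_iff)
    then obtain T1 where T1: "\<And>t. t \<le> T1 \<Longrightarrow> dist (A (complex_of_real t) \<psi>) (A0 \<psi>) < \<delta>"
      unfolding eventually_at_bot_linorder by blast
    have "\<forall>\<^sub>F t in at_bot. dist (A (complex_of_real t + \<i>/2) \<psi>) (A0 \<psi>) < \<delta>"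
      using spec[OF lim_top, of \<psi>] \<delta> by (simp add: tendsto_iff)
    then obtain T2 where T2: "\<And>t. t \<le> T2 \<Longrightarrow> dist (A (complex_of_real t + \<i>/2) \<psi>) (A0 \<psi>) < \<delta>"
      unfolding eventually_at_bot_linorder by blast
    define T where "T = min T1 T2"
    define K where "K = M'/\<delta> + 1"
    have K1: "K \<ge> 1" unfolding K_def using M'0 \<delta> by simp
    define T3 where "T3 = T - ln (8*K) / pi"
    have lnK: "0 \<le> ln (8*K)" using K1 by simp
    have T3T: "T3 \<le> T" unfolding T3_def using lnK pi_gt_zero by simp
    show "\<forall>\<^sub>F t in at_bot. \<forall>y\<in>{0..1/2}. dist (A (Complex t y) \<psi>) (A0 \<psi>) < e"
      unfolding eventually_at_bot_linorder
    proof (intro exI[of _ T3] allI impI ballI)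
      fix t y assume t: "t \<le> T3" and y: "y \<in> {0..1/2::real}"
      define z0 where "z0 = Complex t y"
      define v where "v = f z0"
      have dv: "dist (A (Complex t y) \<psi>) (A0 \<psi>) = norm v"
        by (simp add: v_def f_def z0_def dist_norm)
      show "dist (A (Complex t y) \<psi>) (A0 \<psi>) < e"
      proof (cases "v = 0")
        case True
        then show ?thesis using dv e by simp
      next
        case False
        define u where "u = (1 / norm v) *\<^sub>R v"
        have nu: "norm u = 1" using False by (simp add: u_def)
        have Reu: "Re (lf u v) = norm v"
          using False by (simp add: Re_lf u_def power2_norm_eq_inner[symmetric] power2_eq_square)
        define F where "F z = lf u (A z \<psi> - A0 \<psi>)" for z
        define \<epsilon> where "\<epsilon> = 1 / (4 * (T - t + 1))"
        have tT: "t \<le> T" using t T3T by linarith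
        have \<epsilon>: "\<epsilon> > 0" unfolding \<epsilon>_def using tT by simp
        have est: "cmod (F z0) * exp (\<epsilon>*(Re z0 - T)) * exp (-2*(M'/\<delta>+1) * exp (pi*(Re z0 - T))) \<le> \<delta>"
        proof (rule scalar_est[of F M' T \<delta> \<epsilon> z0])
          show "F holomorphic_on strip_half"
            unfolding F_def by (rule lf_holo) (use analytic in blast)
          show "continuous_on {z. 0 \<le> Im z \<and> Im z \<le> 1/2} F"
            unfolding F_def using bounded_linear.continuous_on[OF bl_lf contA] by (simp add: f_def)
          show "cmod (F z) \<le> M'" if "0 \<le> Im z" "Im z \<le> 1/2" for z
            using lf_bound[OF nu, of "f z"] fb[OF that] by (simp add: F_def f_def)
          show "cmod (F (complex_of_real s)) \<le> \<delta>" if "s \<le> T" for s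
          proof -
            have "cmod (F (complex_of_real s)) \<le> norm (A (complex_of_real s) \<psi> - A0 \<psi>)"
              using lf_bound[OF nu] by (simp add: F_def)
            also have "\<dots> < \<delta>" using T1[of s] that by (simp add: T_def dist_norm)
            finally show ?thesis by simp
          qed
          show "cmod (F (complex_of_real s + \<i>/2)) \<le> \<delta>" if "s \<le> T" for s
          proof -
            have "cmod (F (complex_of_real s + \<i>/2)) \<le> norm (A (complex_of_real s + \<i>/2) \<psi> - A0 \<psi>)"
              using lf_bound[OF nu] by (simp add: F_def)
            also have "\<dots> < \<delta>" using T2[of s] that by (simp add: T_def dist_norm)
            finally show ?thesis by simp
          qed
        qed (use \<delta> \<epsilon> y tT in \<open>auto simp: z0_def\<close>)
        have Fz0: "F z0 = lf u v" by (simp add: F_def v_def f_def)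
        have "\<epsilon> * (T - t) \<le> 1/4"
        proof -
          have "\<epsilon> * (T - t) = (T - t) / (4 * (T - t + 1))" by (simp add: \<epsilon>_def)
          also have "\<dots> \<le> 1/4" using tT by (simp add: divide_le_eq)
          finally show ?thesis .
        qed
        then have e1: "exp (-1/4) \<le> exp (\<epsilon>*(Re z0 - T))" by (simp add: z0_def algebra_simps)
        have "pi * (t - T) \<le> - ln (8*K)"
        proof -
          have "t - T \<le> - ln (8*K) / pi" using t by (simp add: T3_def)
          then have "pi * (t - T) \<le> pi * (- ln (8*K) / pi)" using pi_gt_zero by (intro mult_left_mono) auto
          then show ?thesis by simp
        qed
        then have "exp (pi * (t - T)) \<le> exp (- ln (8*K))" by simp
        also have "\<dots> = 1 / (8*K)" using K1 by (simp add: exp_minus inverse_eq_divide)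
        finally have "exp (pi * (t - T)) \<le> 1 / (8*K)" .
        then have "2*K * exp (pi * (t - T)) \<le> 2*K * (1 / (8*K))" using K1 by (intro mult_left_mono) auto
        also have "\<dots> = 1/4" using K1 by simp
        finally have "2*K * exp (pi * (t - T)) \<le> 1/4" .
        then have e2: "exp (-1/4) \<le> exp (-2*K * exp (pi*(Re z0 - T)))" by (simp add: z0_def)
        have "norm v * (exp (-1/4) * exp (-1/4)) \<le> cmod (F z0) * (exp (\<epsilon>*(Re z0 - T)) * exp (-2*K * exp (pi*(Re z0 - T))))"
        proof (rule mult_mono)
          show "norm v \<le> cmod (F z0)" using Fz0 Reu complex_Re_le_cmod by metis
          show "exp (-1/4) * exp (-1/4) \<le> exp (\<epsilon>*(Re z0 - T)) * exp (-2*K * exp (pi*(Re z0 - T)))"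
            using e1 e2 by (intro mult_mono) auto
        qed auto
        also have "\<dots> \<le> \<delta>" using est by (simp add: K_def mult.assoc)
        finally have "norm v * exp (-1/2) \<le> \<delta>" by (simp add: exp_add[symmetric])
        then have "norm v \<le> \<delta> * exp (1/2)" by (simp add: exp_minus divide_inverse[symmetric] pos_divide_le_eq)
        also have "\<dots> \<le> \<delta> * 2" using real_exp_bound_lemma[of "1/2"] \<delta> by (intro mult_left_mono) auto
        also have "\<dots> < e" using \<delta> by (simp add: \<delta>_def)
        finally show ?thesis using dv by simp
      qed
    qed
  qed
qed


end
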